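(* Let $G,H,K$ be graphs. (1) $G\mid(G\otimes H)$ and $H\mid(G\otimes H)$. (2) If $G\mid H$ and $H\mid K$, then $G\mid K$. (3) If $G\mid H$ and $H\mid G$, then $G$ and $H$ are isomorphic.
   Context: A weight function on finite $U$ is $\alpha:U\times U\to\mathbb{R}$, $\alpha\ge0$, symmetric, summing to $1$; degree $p(u)=\sum_{u'}\alpha(u,u')$; a graph is $(U,\alpha)$. For $G=(U,\alpha)$, $H=(V,\beta)$, the tensor product is $G\otimes H=(U\times V,\alpha\otimes\beta)$ with $(\alpha\otimes\beta)((u,v),(u',v'))=\alpha(u,u')\beta(v,v')$. For graphs $G=(U,\alpha)$, $H=(V,\beta)$ with degrees $p,q$, $H\mid G$ ($H$ is a factor of $G$) means there is a surjective $\phi:U\to V$ with (i) $q(v)=\sum_{u\in\phi^{-1}(v)}p(u)$ for all $v$, and (ii) $q(v)\sum_{u'\in\phi^{-1}(v')}\alpha(u,u')=p(u)\beta(v,v')$ for all $v,v'\in V$, $u\in\phi^{-1}(v)$. $G$ and $H$ are isomorphic if there is a bijection $f:U\to V$ with $\alpha(u,u')=\beta(f(u),f(u'))$ for all $u,u'$. *)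

theory Defs
  imports Complex_Main
begin

text \<open>A graph is a pair (U, alpha) of a finite vertex set and a weight function;
  the weight function is only relevant on U x U.\<close>
type_synonym 'a graph = "'a set \<times> ('a \<Rightarrow> 'a \<Rightarrow> real)"

definition is_graph :: "'a graph \<Rightarrow> bool" where
  "is_graph G \<longleftrightarrow> finite (fst G)
     \<and> (\<forall>u\<in>fst G. \<forall>u'\<in>fst G. snd G u u' \<ge> 0 \<and> snd G u u' = snd G u' u)
     \<and> (\<Sum>u\<in>fst G. \<Sum>u'\<in>fst G. snd G u u') = 1"

definition deg :: "'a graph \<Rightarrow> 'a \<Rightarrow> real" where
  "deg G u = (\<Sum>u'\<in>fst G. snd G u u')"

definition tensor :: "'a graph \<Rightarrow> 'b graph \<Rightarrow> ('a \<times> 'b) graph" where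
  "tensor G H = (fst G \<times> fst H,
     \<lambda>(u, v) (u', v'). snd G u u' * snd H v v')"

definition graph_dvd :: "'b graph \<Rightarrow> 'a graph \<Rightarrow> bool" where
  "graph_dvd H G \<longleftrightarrow> (\<exists>\<phi>. \<phi> ` fst G = fst H
     \<and> (\<forall>v\<in>fst H. deg H v = (\<Sum>u\<in>{u\<in>fst G. \<phi> u = v}. deg G u))
     \<and> (\<forall>v\<in>fst H. \<forall>v'\<in>fst H. \<forall>u\<in>fst G. \<phi> u = v \<longrightarrow>
          deg H v * (\<Sum>u'\<in>{u'\<in>fst G. \<phi> u' = v'}. snd G u u') = deg G u * snd H v v'))"

definition graph_iso :: "'a graph \<Rightarrow> 'b graph \<Rightarrow> bool" where
  "graph_iso G H \<longleftrightarrow> (\<exists>f. bij_betw f (fst G) (fst H)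
     \<and> (\<forall>u\<in>fst G. \<forall>u'\<in>fst G. snd G u u' = snd H (f u) (f u')))"

end

theory Submission
  imports Defs
begin

lemma deg_nonneg: "is_graph G \<Longrightarrow> u \<in> fst G \<Longrightarrow> deg G u \<ge> 0"
  unfolding is_graph_def deg_def by (auto intro: sum_nonneg)

lemma deg_zero: assumes "is_graph G" "u \<in> fst G" "deg G u = 0" "u' \<in> fst G"
  shows "snd G u u' = 0"
proof -
  have "finite (fst G)" "\<forall>x\<in>fst G. snd G u x \<ge> 0" using assms(1,2) unfolding is_graph_def by auto
  then show ?thesis using assms(3,4) sum_nonneg_eq_0_iff unfolding deg_def by blast
qed

lemma deg_sum: "is_graph G \<Longrightarrow> (\<Sum>u\<in>fst G. deg G u) = 1"
  unfolding is_graph_def deg_def by auto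

lemma graph_ne: "is_graph G \<Longrightarrow> fst G \<noteq> {}"
  unfolding is_graph_def by auto

lemma deg_tensor: assumes "u \<in> fst G" "v \<in> fst H" "finite (fst G)" "finite (fst H)"
  shows "deg (tensor G H) (u, v) = deg G u * deg H v"
proof -
  have "deg (tensor G H) (u, v) = (\<Sum>(u',v')\<in>fst G \<times> fst H. snd G u u' * snd H v v')"
    unfolding deg_def tensor_def by simp
  also have "\<dots> = (\<Sum>u'\<in>fst G. \<Sum>v'\<in>fst H. snd G u u' * snd H v v')"
    by (simp add: sum.cartesian_product)
  also have "\<dots> = deg G u * deg H v" unfolding deg_def by (simp add: sum_product)
  finally show ?thesis .
qed

lemma dvd_tensor1: assumes g: "is_graph G" and h: "is_graph H"
  shows "graph_dvd G (tensor G H)"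
  unfolding graph_dvd_def
proof (intro exI[of _ fst] conjI ballI impI)
  have fG: "finite (fst G)" and fH: "finite (fst H)" using g h unfolding is_graph_def by auto
  show "fst ` fst (tensor G H) = fst G" using graph_ne[OF h] unfolding tensor_def by auto
  fix u assume u: "u \<in> fst G"
  have S: "{x \<in> fst (tensor G H). fst x = u} = {u} \<times> fst H" using u unfolding tensor_def by auto
  have "(\<Sum>x\<in>{u} \<times> fst H. deg (tensor G H) x) = (\<Sum>v\<in>fst H. deg G u * deg H v)"
  proof -
    have "(\<Sum>x\<in>{u} \<times> fst H. deg (tensor G H) x) = (\<Sum>v\<in>fst H. deg (tensor G H) (u,v))"
      by (rule sum.reindex_bij_witness[where i="\<lambda>v. (u,v)" and j=snd]) auto
    then show ?thesis by (simp add: deg_tensor u fH fG)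
  qed
  also have "\<dots> = deg G u" using deg_sum[OF h] by (simp add: sum_distrib_left[symmetric])
  finally show "deg G u = (\<Sum>x\<in>{x \<in> fst (tensor G H). fst x = u}. deg (tensor G H) x)"
    using S by simp
next
  have fG: "finite (fst G)" and fH: "finite (fst H)" using g h unfolding is_graph_def by auto
  fix u u' x assume u: "u \<in> fst G" and u': "u' \<in> fst G" and x: "x \<in> fst (tensor G H)" and e: "fst x = u"
  obtain v where xv: "x = (u, v)" and v: "v \<in> fst H" using x e unfolding tensor_def by auto
  have S: "{x \<in> fst (tensor G H). fst x = u'} = {u'} \<times> fst H" using u' unfolding tensor_def by auto
  have "(\<Sum>y\<in>{u'} \<times> fst H. snd (tensor G H) x y) = (\<Sum>v'\<in>fst H. snd G u u' * snd H v v')"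
    by (simp add: sum.cartesian_product[symmetric] xv tensor_def)
  also have "\<dots> = snd G u u' * deg H v" by (simp add: deg_def sum_distrib_left)
  finally show "deg G u * (\<Sum>y\<in>{y \<in> fst (tensor G H). fst y = u'}. snd (tensor G H) x y) =
       deg (tensor G H) x * snd G u u'"
    using S by (simp add: xv deg_tensor u v fG fH)
qed

lemma dvd_tensor2: assumes g: "is_graph G" and h: "is_graph H"
  shows "graph_dvd H (tensor G H)"
  unfolding graph_dvd_def
proof (intro exI[of _ snd] conjI ballI impI)
  have fG: "finite (fst G)" and fH: "finite (fst H)" using g h unfolding is_graph_def by auto
  show "snd ` fst (tensor G H) = fst H" using graph_ne[OF g] unfolding tensor_def by auto
  fix v assume v: "v \<in> fst H"
  have S: "{x \<in> fst (tensor G H). snd x = v} = fst G \<times> {v}" using v unfolding tensor_def by auto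
  have "(\<Sum>x\<in>fst G \<times> {v}. deg (tensor G H) x) = (\<Sum>u\<in>fst G. deg G u * deg H v)"
  proof -
    have "(\<Sum>x\<in>fst G \<times> {v}. deg (tensor G H) x) = (\<Sum>u\<in>fst G. deg (tensor G H) (u,v))"
      by (rule sum.reindex_bij_witness[where i="\<lambda>u. (u,v)" and j=fst]) auto
    then show ?thesis by (simp add: deg_tensor v fH fG)
  qed
  also have "\<dots> = deg H v" using deg_sum[OF g] by (simp add: sum_distrib_right[symmetric])
  finally show "deg H v = (\<Sum>x\<in>{x \<in> fst (tensor G H). snd x = v}. deg (tensor G H) x)"
    using S by simp
next
  have fG: "finite (fst G)" and fH: "finite (fst H)" using g h unfolding is_graph_def by auto
  fix v v' x assume v: "v \<in> fst H" and v': "v' \<in> fst H" and x: "x \<in> fst (tensor G H)" and e: "snd x = v"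
  obtain u where xu: "x = (u, v)" and u: "u \<in> fst G" using x e unfolding tensor_def by auto
  have S: "{x \<in> fst (tensor G H). snd x = v'} = fst G \<times> {v'}" using v' unfolding tensor_def by auto
  have "(\<Sum>y\<in>fst G \<times> {v'}. snd (tensor G H) x y) = (\<Sum>u'\<in>fst G. snd G u u' * snd H v v')"
    by (simp add: sum.cartesian_product[symmetric] xu tensor_def)
  also have "\<dots> = deg G u * snd H v v'" by (simp add: deg_def sum_distrib_right)
  finally show "deg H v * (\<Sum>y\<in>{y \<in> fst (tensor G H). snd y = v'}. snd (tensor G H) x y) =
       deg (tensor G H) x * snd H v v'"
    using S by (simp add: xu deg_tensor u v fG fH)
qed


lemma group_sum:
  assumes fK: "finite K" and im: "\<psi> ` K \<subseteq> H" and fH: "finite H"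
  shows "(\<Sum>w\<in>{w\<in>K. \<phi> (\<psi> w) = v}. f w) = (\<Sum>u\<in>{u\<in>H. \<phi> u = v}. \<Sum>w\<in>{w\<in>K. \<psi> w = u}. f w)"
proof -
  have "(\<Sum>w\<in>{w\<in>K. \<phi> (\<psi> w) = v}. f w) =
     (\<Sum>u\<in>{u\<in>H. \<phi> u = v}. \<Sum>w\<in>{x\<in>{w\<in>K. \<phi> (\<psi> w) = v}. \<psi> x = u}. f w)"
    by (rule sum.group[symmetric]) (use fK fH im in auto)
  also have "\<dots> = (\<Sum>u\<in>{u\<in>H. \<phi> u = v}. \<Sum>w\<in>{w\<in>K. \<psi> w = u}. f w)"
    by (rule sum.cong) (auto intro!: sum.cong)
  finally show ?thesis .
qed

lemma dvd_trans:
  assumes h: "is_graph H" and k: "is_graph K" and gh: "graph_dvd G H" and hk: "graph_dvd H K"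
  shows "graph_dvd G K"
proof -
  have fH: "finite (fst H)" and fK: "finite (fst K)" using h k unfolding is_graph_def by auto
  obtain \<phi> where p1: "\<phi> ` fst H = fst G"
    and p2: "\<forall>v\<in>fst G. deg G v = (\<Sum>u\<in>{u\<in>fst H. \<phi> u = v}. deg H u)"
    and p3: "\<forall>v\<in>fst G. \<forall>v'\<in>fst G. \<forall>u\<in>fst H. \<phi> u = v \<longrightarrow>
          deg G v * (\<Sum>u'\<in>{u'\<in>fst H. \<phi> u' = v'}. snd H u u') = deg H u * snd G v v'"
    using gh unfolding graph_dvd_def by blast
  obtain \<psi> where q1: "\<psi> ` fst K = fst H"
    and q2: "\<forall>v\<in>fst H. deg H v = (\<Sum>u\<in>{u\<in>fst K. \<psi> u = v}. deg K u)"
    and q3: "\<forall>v\<in>fst H. \<forall>v'\<in>fst H. \<forall>u\<in>fst K. \<psi> u = v \<longrightarrow>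
          deg H v * (\<Sum>u'\<in>{u'\<in>fst K. \<psi> u' = v'}. snd K u u') = deg K u * snd H v v'"
    using hk unfolding graph_dvd_def by blast
  have im: "\<psi> ` fst K \<subseteq> fst H" using q1 by simp
  show ?thesis unfolding graph_dvd_def
  proof (intro exI[of _ "\<phi> \<circ> \<psi>"] conjI ballI impI)
    show "(\<phi> \<circ> \<psi>) ` fst K = fst G" using p1 q1 by (metis image_comp)
  next
    fix v assume v: "v \<in> fst G"
    have "deg G v = (\<Sum>u\<in>{u\<in>fst H. \<phi> u = v}. \<Sum>w\<in>{w\<in>fst K. \<psi> w = u}. deg K w)"
      using p2 q2 v by (auto intro!: sum.cong)
    also have "\<dots> = (\<Sum>w\<in>{w\<in>fst K. \<phi> (\<psi> w) = v}. deg K w)"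
      by (rule group_sum[symmetric, OF fK im fH])
    finally show "deg G v = (\<Sum>u\<in>{u\<in>fst K. (\<phi> \<circ> \<psi>) u = v}. deg K u)" by simp
  next
    fix v v' w assume v: "v \<in> fst G" and v': "v' \<in> fst G" and w: "w \<in> fst K"
      and e: "(\<phi> \<circ> \<psi>) w = v"
    define u where "u = \<psi> w"
    have u: "u \<in> fst H" using w q1 u_def by auto
    have eu: "\<phi> u = v" using e u_def by simp
    have G: "(\<Sum>w'\<in>{w'\<in>fst K. (\<phi> \<circ> \<psi>) w' = v'}. snd K w w') =
       (\<Sum>u'\<in>{u'\<in>fst H. \<phi> u' = v'}. \<Sum>w'\<in>{w'\<in>fst K. \<psi> w' = u'}. snd K w w')"
      using group_sum[OF fK im fH] by simp
    show "deg G v * (\<Sum>u\<in>{u\<in>fst K. (\<phi> \<circ> \<psi>) u = v'}. snd K w u) = deg K w * snd G v v'"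
    proof (cases "deg H u = 0")
      case True
      have "deg K w \<le> (\<Sum>x\<in>{x\<in>fst K. \<psi> x = u}. deg K x)"
        by (rule member_le_sum) (use w u_def fK deg_nonneg[OF k] in auto)
      then have "deg K w \<le> 0" using q2 u True by simp
      then have dk: "deg K w = 0" using deg_nonneg[OF k w] by simp
      have "(\<Sum>u\<in>{u\<in>fst K. (\<phi> \<circ> \<psi>) u = v'}. snd K w u) = 0"
        by (rule sum.neutral) (use deg_zero[OF k w dk] in auto)
      then show ?thesis using dk by simp
    next
      case False
      have inner: "(\<Sum>w'\<in>{w'\<in>fst K. \<psi> w' = u'}. snd K w w') = deg K w * snd H u u' / deg H u"
        if "u' \<in> fst H" for u'
        using q3 u that w u_def False by (simp add: field_simps)
      have "(\<Sum>w'\<in>{w'\<in>fst K. (\<phi> \<circ> \<psi>) w' = v'}. snd K w w') =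
          (\<Sum>u'\<in>{u'\<in>fst H. \<phi> u' = v'}. deg K w / deg H u * snd H u u')"
        unfolding G by (rule sum.cong) (auto simp: inner)
      also have "\<dots> = deg K w / deg H u * (\<Sum>u'\<in>{u'\<in>fst H. \<phi> u' = v'}. snd H u u')"
        by (simp add: sum_distrib_left)
      finally have "deg G v * (\<Sum>w'\<in>{w'\<in>fst K. (\<phi> \<circ> \<psi>) w' = v'}. snd K w w') =
         deg K w / deg H u * (deg G v * (\<Sum>u'\<in>{u'\<in>fst H. \<phi> u' = v'}. snd H u u'))"
        by simp
      also have "\<dots> = deg K w / deg H u * (deg H u * snd G v v')"
        using p3 v v' u eu by simp
      also have "\<dots> = deg K w * snd G v v'" using False by simp
      finally show ?thesis .
    qed
  qed
qed

lemma dvd_antisym: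
  assumes g: "is_graph G" and h: "is_graph H" and gh: "graph_dvd G H" and hg: "graph_dvd H G"
  shows "graph_iso G H"
proof -
  have fG: "finite (fst G)" and fH: "finite (fst H)" using g h unfolding is_graph_def by auto
  obtain \<phi> where p1: "\<phi> ` fst H = fst G" using gh unfolding graph_dvd_def by blast
  obtain f where f1: "f ` fst G = fst H"
    and f2: "\<forall>v\<in>fst H. deg H v = (\<Sum>u\<in>{u\<in>fst G. f u = v}. deg G u)"
    and f3: "\<forall>v\<in>fst H. \<forall>v'\<in>fst H. \<forall>u\<in>fst G. f u = v \<longrightarrow>
          deg H v * (\<Sum>u'\<in>{u'\<in>fst G. f u' = v'}. snd G u u') = deg G u * snd H v v'"
    using hg unfolding graph_dvd_def by blast
  have c1: "card (fst G) \<le> card (fst H)" using p1 card_image_le[OF fH, of \<phi>] by simp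
  have c2: "card (fst H) \<le> card (fst G)" using f1 card_image_le[OF fG, of f] by simp
  have inj: "inj_on f (fst G)"
    by (rule eq_card_imp_inj_on[OF fG]) (use c1 c2 f1 in simp)
  have bij: "bij_betw f (fst G) (fst H)" using inj f1 by (simp add: bij_betw_def)
  have S: "{u'\<in>fst G. f u' = f v'} = {v'}" if "v' \<in> fst G" for v'
    using inj that by (auto dest: inj_onD)
  show ?thesis unfolding graph_iso_def
  proof (intro exI[of _ f] conjI ballI bij)
    fix v v' assume v: "v \<in> fst G" and v': "v' \<in> fst G"
    have fv: "f v \<in> fst H" and fv': "f v' \<in> fst H" using f1 v v' by auto
    have d: "deg H (f v) = deg G v" using f2 fv S[OF v] by simp
    have e: "deg G v * snd G v v' = deg G v * snd H (f v) (f v')"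
    proof -
      have "deg H (f v) * (\<Sum>u'\<in>{u'\<in>fst G. f u' = f v'}. snd G v u') = deg G v * snd H (f v) (f v')"
        using f3 fv fv' v by blast
      then show ?thesis using S[OF v'] d by simp
    qed
    show "snd G v v' = snd H (f v) (f v')"
    proof (cases "deg G v = 0")
      case True
      have "snd G v v' = 0" using deg_zero[OF g v True v'] .
      moreover have "snd H (f v) (f v') = 0" using deg_zero[OF h fv _ fv'] True d by simp
      ultimately show ?thesis by simp
    next
      case False
      then show ?thesis using e by simp
    qed
  qed
qed

theorem proposition4p3:
  fixes G :: "'a graph" and H :: "'b graph" and K :: "'c graph"
  assumes "is_graph G" and "is_graph H" and "is_graph K"
  shows "(graph_dvd G (tensor G H) \<and> graph_dvd H (tensor G H))
    \<and> (graph_dvd G H \<and> graph_dvd H K \<longrightarrow> graph_dvd G K)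
    \<and> (graph_dvd G H \<and> graph_dvd H G \<longrightarrow> graph_iso G H)"
  using dvd_tensor1 dvd_tensor2 dvd_trans dvd_antisym assms by blast

end
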